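(* Let $Z_n=X^*_{2^n}$. There exist a sequence of integers $n_k\to\infty$ and a constant $C<\infty$ such that for all $k$, $$E Z_{n_k+1}\le E Z_{n_k}+C .$$
   Context: For an integer $N\ge 1$ let $V_N=(\{0,1,\dots,N\})^2\subset\mathbb Z^2$, $V_N^o=(\{1,\dots,N-1\})^2$, and $\partial V_N=V_N\setminus V_N^o$. Let $\{w_m\}_{m\ge0}$ be simple random walk on $\mathbb Z^2$ started in $V_N$, killed at $\tau=\min\{m: w_m\in\partial V_N\}$, and define the Green function $G_N(x,y)=E^x\big(\sum_{m=0}^{\tau}\mathbf 1_{\{w_m=y\}}\big)$ for $x,y\in V_N$ (with $E^x$ expectation for the walk started at $x$; in particular $G_N(x,y)=0$ if $x$ or $y\in\partial V_N$). The discrete Gaussian free field (GFF) on $V_N$ with Dirichlet boundary conditions is the centered Gaussian field $\{X^N_z\}_{z\in V_N}$ with covariance $E[X^N_xX^N_y]=G_N(x,y)$. Write $X_N^*=\max_{z\in V_N}X^N_z$. *)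

theory Defs
  imports "HOL-Probability.Probability"
begin

definition VN :: "nat \<Rightarrow> (int \<times> int) set" where
  "VN N = {0..int N} \<times> {0..int N}"

definition VNint :: "nat \<Rightarrow> (int \<times> int) set" where
  "VNint N = {1..int N - 1} \<times> {1..int N - 1}"

definition bdVN :: "nat \<Rightarrow> (int \<times> int) set" where
  "bdVN N = VN N - VNint N"

definition adj :: "int \<times> int \<Rightarrow> int \<times> int \<Rightarrow> bool" where
  "adj z y \<longleftrightarrow> \<bar>fst z - fst y\<bar> + \<bar>snd z - snd y\<bar> = 1"

text \<open>killed_p N m x y = P^x(w_m = y and w_0, ..., w_(m-1) stay in the interior),
  for simple random walk (step probability 1/4 to each neighbour), x and y interior.\<close>
fun killed_p :: "nat \<Rightarrow> nat \<Rightarrow> int \<times> int \<Rightarrow> int \<times> int \<Rightarrow> real" where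
  "killed_p N 0 x y = (if x = y then 1 else 0)"
| "killed_p N (Suc m) x y =
     (\<Sum>z\<in>VNint N. killed_p N m x z * (if adj z y then 1/4 else 0))"

text \<open>Green function G_N(x,y) = E^x (sum_{m=0}^{tau} 1{w_m = y}); equal to 0 if x or y is
  on the boundary; for interior x, y it is the sum over m of P^x(w_m = y, m < tau).\<close>
definition green :: "nat \<Rightarrow> int \<times> int \<Rightarrow> int \<times> int \<Rightarrow> real" where
  "green N x y = (if x \<in> VNint N \<and> y \<in> VNint N then (\<Sum>m. killed_p N m x y) else 0)"

definition centered_normal_rv :: "'a measure \<Rightarrow> ('a \<Rightarrow> real) \<Rightarrow> real \<Rightarrow> bool" where
  "centered_normal_rv M Y v \<longleftrightarrow>
     (v > 0 \<and> distributed M lborel Y (normal_density 0 (sqrt v))) \<or>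
     (v = 0 \<and> (AE \<omega> in M. Y \<omega> = 0))"

definition is_GFF :: "'a measure \<Rightarrow> nat \<Rightarrow> (int \<times> int \<Rightarrow> 'a \<Rightarrow> real) \<Rightarrow> bool" where
  "is_GFF M N X \<longleftrightarrow>
     prob_space M \<and>
     (\<forall>z\<in>VN N. X z \<in> borel_measurable M) \<and>
     (\<forall>a :: int \<times> int \<Rightarrow> real.
        centered_normal_rv M (\<lambda>\<omega>. \<Sum>z\<in>VN N. a z * X z \<omega>)
          (\<Sum>x\<in>VN N. \<Sum>y\<in>VN N. a x * a y * green N x y)) \<and>
     (\<forall>x\<in>VN N. \<forall>y\<in>VN N. integral\<^sup>L M (\<lambda>\<omega>. X x \<omega> * X y \<omega>) = green N x y)"

definition field_max :: "nat \<Rightarrow> (int \<times> int \<Rightarrow> 'a \<Rightarrow> real) \<Rightarrow> 'a \<Rightarrow> real" where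
  "field_max N X \<omega> = Max ((\<lambda>z. X z \<omega>) ` VN N)"

end

theory Submission
  imports Defs
begin


lemma normal_exp_identity:
  fixes v x :: real assumes v: "v > 0"
  shows "normal_density 0 (sqrt v) x * exp x = exp (v/2) * normal_density v (sqrt v) x"
proof -
  have s: "(sqrt v)\<^sup>2 = v" using v by simp
  have e: "x + - (x\<^sup>2 / (v * 2)) = v/2 + - ((x - v)\<^sup>2 / (v * 2))"
    using v by (simp add: field_simps power2_eq_square)
  have "exp x * exp (- (x\<^sup>2 / (v * 2))) = exp (v / 2) * exp (- ((x - v)\<^sup>2 / (v * 2)))"
    by (simp only: mult_exp_exp e)
  then show ?thesis unfolding normal_density_def s
    using v by (simp add: ac_simps)
qed

lemma normal_mgf:
  assumes P: "prob_space M" and cn: "centered_normal_rv M Y v"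
    and Ym: "Y \<in> borel_measurable M"
  shows "integrable M (\<lambda>\<omega>. exp (Y \<omega>)) \<and> integral\<^sup>L M (\<lambda>\<omega>. exp (Y \<omega>)) = exp (v/2)"
proof (cases "v > 0")
  case True
  then have D: "distributed M lborel Y (normal_density 0 (sqrt v))"
    using cn unfolding centered_normal_rv_def by auto
  have sp: "sqrt v > 0" using True by simp
  have nn: "\<And>x. 0 \<le> normal_density 0 (sqrt v) x" by (simp add: normal_density_nonneg)
  have eq: "(\<lambda>x. normal_density 0 (sqrt v) x * exp x) = (\<lambda>x. exp (v/2) * normal_density v (sqrt v) x)"
    using normal_exp_identity[OF True] by auto
  have i1: "integrable lborel (\<lambda>x. normal_density 0 (sqrt v) x * exp x)"
    unfolding eq using integrable_normal_density[OF sp] by simp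
  have "integrable M (\<lambda>\<omega>. exp (Y \<omega>))"
    using distributed_integrable[OF D, of exp] i1 nn by simp
  moreover have "integral\<^sup>L M (\<lambda>\<omega>. exp (Y \<omega>)) = exp (v/2)"
    using distributed_integral[OF D, of exp, symmetric] nn eq integral_normal_density[OF sp] by simp
  ultimately show ?thesis by simp
next
  case False
  then have v0: "v = 0" and ae: "AE \<omega> in M. Y \<omega> = 0"
    using cn unfolding centered_normal_rv_def by auto
  interpret prob_space M by fact
  have ae2: "AE \<omega> in M. exp (Y \<omega>) = 1" using ae by eventually_elim simp
  have "integrable M (\<lambda>\<omega>. exp (Y \<omega>))"
    using integrable_cong_AE[of "\<lambda>\<omega>. exp (Y \<omega>)" M "\<lambda>_. 1"] ae2 Ym by simp
  moreover have "integral\<^sup>L M (\<lambda>\<omega>. exp (Y \<omega>)) = 1"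
    using integral_cong_AE[of "\<lambda>\<omega>. exp (Y \<omega>)" M "\<lambda>_. 1"] ae2 Ym by (simp add: prob_space)
  ultimately show ?thesis using v0 by simp
qed



lemma killed_nonneg: "killed_p N m x y \<ge> 0"
  by (induction m arbitrary: y) (auto intro!: sum_nonneg)

lemma finite_VNint[simp]: "finite (VNint N)" by (simp add: VNint_def)
lemma finite_VN[simp]: "finite (VN N)" by (simp add: VN_def)

lemma adj_iff: "adj z y \<longleftrightarrow> y \<in> {(fst z+1, snd z), (fst z - 1, snd z), (fst z, snd z+1), (fst z, snd z - 1)}"
  by (cases z; cases y) (auto simp: adj_def abs_if split: if_splits)

lemma poly_ineq:
  fixes a b :: real
  shows "(a\<^sup>2+b\<^sup>2+1)^4 \<le> ((a+1)\<^sup>2+b\<^sup>2+1)*((a-1)\<^sup>2+b\<^sup>2+1)*(a\<^sup>2+(b+1)\<^sup>2+1)*(a\<^sup>2+(b-1)\<^sup>2+1)"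
proof -
  define u where "u = a\<^sup>2+b\<^sup>2+2"
  have u2: "u \<ge> 2" unfolding u_def by simp
  have e: "((a+1)\<^sup>2+b\<^sup>2+1)*((a-1)\<^sup>2+b\<^sup>2+1)*(a\<^sup>2+(b+1)\<^sup>2+1)*(a\<^sup>2+(b-1)\<^sup>2+1) - (a\<^sup>2+b\<^sup>2+1)^4
      = 2*u\<^sup>2 + 4*u - 1 + 16*a\<^sup>2*b\<^sup>2"
    unfolding u_def by algebra
  have "0 \<le> 2*u\<^sup>2 + 4*u - 1 + 16*a\<^sup>2*b\<^sup>2" 
  proof -
    have "0 \<le> 16*a\<^sup>2*b\<^sup>2" by simp
    moreover have "0 \<le> 2*u\<^sup>2" by simp
    ultimately show ?thesis using u2 by linarith
  qed
  then show ?thesis using e by linarith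
qed

definition gf :: "nat \<Rightarrow> int \<times> int \<Rightarrow> int \<times> int \<Rightarrow> real" where
  "gf N x y = (ln (2 * real N ^ 2 + 1) - ln (real_of_int ((fst y - fst x)\<^sup>2 + (snd y - snd x)\<^sup>2) + 1)) / ln 2"

lemma gf_nonneg:
  assumes "x \<in> VN N" "y \<in> VN N" shows "gf N x y \<ge> 0"
proof -
  obtain x1 x2 y1 y2 where xy: "x = (x1,x2)" "y = (y1,y2)" by (cases x; cases y)
  have b: "0 \<le> x1" "x1 \<le> int N" "0 \<le> x2" "x2 \<le> int N" "0 \<le> y1" "y1 \<le> int N" "0 \<le> y2" "y2 \<le> int N"
    using assms xy by (auto simp: VN_def)
  have "\<bar>y1 - x1\<bar> \<le> int N" "\<bar>y2 - x2\<bar> \<le> int N" using b by auto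
  then have "(y1 - x1)\<^sup>2 \<le> (int N)\<^sup>2" "(y2 - x2)\<^sup>2 \<le> (int N)\<^sup>2"
    by (metis abs_le_square_iff abs_of_nat of_nat_0_le_iff abs_ge_self dual_order.trans)+
  then have "real_of_int ((y1 - x1)\<^sup>2 + (y2 - x2)\<^sup>2) \<le> 2 * real N ^ 2"
    by (smt (verit, ccfv_SIG) of_int_add of_int_le_iff of_int_of_nat_eq of_int_power)
  moreover have "0 \<le> real_of_int ((y1 - x1)\<^sup>2 + (y2 - x2)\<^sup>2)" by simp
  ultimately have "ln (real_of_int ((y1 - x1)\<^sup>2 + (y2 - x2)\<^sup>2) + 1) \<le> ln (2 * real N ^ 2 + 1)"
    by (intro ln_le_cancel_iff[THEN iffD2]) (auto simp: add_nonneg_pos)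
  then show ?thesis unfolding gf_def xy by simp
qed

lemma log_step:
  fixes a b L :: real
  shows "(((L - ln ((a+1)\<^sup>2+b\<^sup>2+1)) + (L - ln ((a-1)\<^sup>2+b\<^sup>2+1)) + (L - ln (a\<^sup>2+(b+1)\<^sup>2+1))
          + (L - ln (a\<^sup>2+(b-1)\<^sup>2+1))) / ln 2) / 4 + (if a = 0 \<and> b = 0 then 1 else 0)
         \<le> (L - ln (a\<^sup>2+b\<^sup>2+1)) / ln 2"
proof (cases "a = 0 \<and> b = 0")
  case True
  then show ?thesis by (simp add: field_simps)
next
  case False
  define p1 where "p1 = (a+1)\<^sup>2+b\<^sup>2+1"
  define p2 where "p2 = (a-1)\<^sup>2+b\<^sup>2+1"
  define p3 where "p3 = a\<^sup>2+(b+1)\<^sup>2+1"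
  define p4 where "p4 = a\<^sup>2+(b-1)\<^sup>2+1"
  define q where "q = a\<^sup>2+b\<^sup>2+1"
  have pos: "p1 > 0" "p2 > 0" "p3 > 0" "p4 > 0" "q > 0"
    unfolding p1_def p2_def p3_def p4_def q_def by (simp_all add: add_nonneg_pos)
  have "q^4 \<le> p1*p2*p3*p4" using poly_ineq[of a b] unfolding p1_def p2_def p3_def p4_def q_def .
  then have "ln (q^4) \<le> ln (p1*p2*p3*p4)" using pos by (simp add: zero_less_mult_iff)
  then have "4 * ln q \<le> ln p1 + ln p2 + ln p3 + ln p4"
    using pos by (simp add: ln_mult ln_realpow zero_less_mult_iff)
  then have "((L - ln p1) + (L - ln p2) + (L - ln p3) + (L - ln p4)) / 4 \<le> L - ln q" by (simp add: field_simps)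
  then have "(((L - ln p1) + (L - ln p2) + (L - ln p3) + (L - ln p4)) / 4) / ln 2 \<le> (L - ln q) / ln 2"
    by (intro divide_right_mono) auto
  then show ?thesis
    unfolding if_not_P[OF False] p1_def[symmetric] p2_def[symmetric] p3_def[symmetric] p4_def[symmetric] q_def[symmetric]
    by simp
qed

lemma nbr:
  assumes z: "z \<in> VNint N" and x: "x \<in> VNint N"
  shows "(\<Sum>y\<in>VNint N. (if adj z y then 1/4 else 0) * gf N x y) + (if z = x then 1 else 0) \<le> gf N x z"
proof -
  obtain z1 z2 x1 x2 where zx: "z = (z1,z2)" "x = (x1,x2)" by (cases z; cases x)
  define A where "A = {(z1+1, z2), (z1 - 1, z2), (z1, z2+1), (z1, z2 - 1)}"
  have adjA: "\<And>y. adj z y \<longleftrightarrow> y \<in> A" unfolding A_def using adj_iff[of z] zx by simp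
  have finA: "finite A" unfolding A_def by simp
  have AVN: "A \<subseteq> VN N" using z unfolding A_def zx VNint_def VN_def by auto
  have xVN: "x \<in> VN N" using x by (auto simp: VNint_def VN_def)
  have "(\<Sum>y\<in>VNint N. (if adj z y then 1/4 else 0) * gf N x y) = (\<Sum>y\<in>VNint N. (if y \<in> A then gf N x y / 4 else 0))"
    by (intro sum.cong) (auto simp: adjA)
  also have "\<dots> = (\<Sum>y\<in>VNint N \<inter> A. gf N x y / 4)"
    by (simp add: sum.inter_restrict)
  also have "\<dots> \<le> (\<Sum>y\<in>A. gf N x y / 4)"
    using AVN xVN gf_nonneg[of x N] by (intro sum_mono2) (auto simp: finA)
  also have "\<dots> = (gf N x (z1+1, z2) + gf N x (z1 - 1, z2) + gf N x (z1, z2+1) + gf N x (z1, z2 - 1)) / 4"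
    unfolding A_def by (simp add: field_simps)
  finally have s: "(\<Sum>y\<in>VNint N. (if adj z y then 1/4 else 0) * gf N x y) \<le> \<dots>" .
  define a where "a = real_of_int (z1 - x1)"
  define b where "b = real_of_int (z2 - x2)"
  have zxe: "(z = x) = (a = 0 \<and> b = 0)" unfolding a_def b_def zx by auto
  have "(gf N x (z1+1, z2) + gf N x (z1 - 1, z2) + gf N x (z1, z2+1) + gf N x (z1, z2 - 1)) / 4
      + (if z = x then 1 else 0) \<le> gf N x z"
    using log_step[of "ln (2 * real N ^ 2 + 1)" a b] unfolding zxe
    unfolding gf_def zx a_def b_def by (simp add: algebra_simps add_divide_distrib diff_divide_distrib)
  then show ?thesis using s by linarith
qed

definition pr :: "nat \<Rightarrow> int \<times> int \<Rightarrow> nat \<Rightarrow> real" where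
  "pr N x m = (\<Sum>y\<in>VNint N. killed_p N m x y * gf N x y)"

lemma pr_step:
  assumes x: "x \<in> VNint N"
  shows "killed_p N m x x + pr N x (Suc m) \<le> pr N x m"
proof -
  have "pr N x (Suc m) = (\<Sum>y\<in>VNint N. \<Sum>z\<in>VNint N. killed_p N m x z * ((if adj z y then 1/4 else 0) * gf N x y))"
    unfolding pr_def by (simp add: sum_distrib_right mult.assoc)
  also have "\<dots> = (\<Sum>z\<in>VNint N. \<Sum>y\<in>VNint N. killed_p N m x z * ((if adj z y then 1/4 else 0) * gf N x y))"
    by (rule sum.swap)
  also have "\<dots> = (\<Sum>z\<in>VNint N. killed_p N m x z * (\<Sum>y\<in>VNint N. (if adj z y then 1/4 else 0) * gf N x y))"
    by (simp add: sum_distrib_left)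
  also have "\<dots> \<le> (\<Sum>z\<in>VNint N. killed_p N m x z * (gf N x z - (if z = x then 1 else 0)))"
    using nbr[OF _ x] killed_nonneg
    by (intro sum_mono mult_left_mono) (auto simp: algebra_simps)
  also have "\<dots> = pr N x m - (\<Sum>z\<in>VNint N. killed_p N m x z * (if z = x then 1 else 0))"
    unfolding pr_def by (simp add: algebra_simps sum_subtractf)
  also have "(\<Sum>z\<in>VNint N. killed_p N m x z * (if z = x then 1 else 0)) = killed_p N m x x"
    using x by (simp add: if_distrib[of "\<lambda>t. _ * t"] sum.delta' cong: if_cong)
  finally show ?thesis by linarith
qed

lemma pr_nonneg: assumes x: "x \<in> VNint N" shows "pr N x m \<ge> 0"
  unfolding pr_def using gf_nonneg[of x N] killed_nonneg x
  by (intro sum_nonneg mult_nonneg_nonneg) (auto simp: VNint_def VN_def)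

lemma pr0: assumes x: "x \<in> VNint N" shows "pr N x 0 = ln (2 * real N ^ 2 + 1) / ln 2"
proof -
  have "pr N x 0 = (\<Sum>y\<in>VNint N. if y = x then gf N x x else 0)"
    unfolding pr_def by (intro sum.cong) auto
  also have "\<dots> = gf N x x" using x by simp
  finally show ?thesis by (simp add: gf_def)
qed

lemma partial_green:
  assumes x: "x \<in> VNint N"
  shows "(\<Sum>m<T. killed_p N m x x) \<le> ln (2 * real N ^ 2 + 1) / ln 2"
proof -
  have "(\<Sum>m<T. killed_p N m x x) + pr N x T \<le> pr N x 0" for T
  proof (induction T)
    case 0 then show ?case by simp
  next
    case (Suc T) then show ?case using pr_step[OF x, of T] by simp
  qed
  then have "(\<Sum>m<T. killed_p N m x x) + pr N x T \<le> pr N x 0" .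
  then show ?thesis using pr_nonneg[OF x, of T] pr0[OF x] by linarith
qed

lemma green_diag_bound: "green N x x \<le> ln (2 * real N ^ 2 + 1) / ln 2"
proof (cases "x \<in> VNint N")
  case True
  have B: "\<And>T. (\<Sum>m<T. killed_p N m x x) \<le> ln (2 * real N ^ 2 + 1) / ln 2"
    using partial_green[OF True] .
  have S: "summable (\<lambda>m. killed_p N m x x)"
    by (rule summableI_nonneg_bounded[OF killed_nonneg B])
  show ?thesis unfolding green_def using True B by (auto intro: suminf_le_const[OF S])
next
  case False
  then show ?thesis unfolding green_def by simp
qed



lemma card_VN: "card (VN N) = (N+1)^2"
proof -
  have "nat (int N + 1) = N + 1" by simp
  then show ?thesis by (simp add: VN_def card_cartesian_product power2_eq_square del: nat_int_add)
qed

lemma GFF_single: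
  assumes G: "is_GFF M N X" and z: "z \<in> VN N"
  shows "centered_normal_rv M (X z) (green N z z)"
proof -
  let ?a = "\<lambda>w::int\<times>int. if w = z then 1 else (0::real)"
  have c: "centered_normal_rv M (\<lambda>\<omega>. \<Sum>w\<in>VN N. ?a w * X w \<omega>)
          (\<Sum>x\<in>VN N. \<Sum>y\<in>VN N. ?a x * ?a y * green N x y)"
    using G unfolding is_GFF_def by (elim conjE allE) assumption
  have e1: "(\<lambda>\<omega>. \<Sum>w\<in>VN N. ?a w * X w \<omega>) = X z"
    using z by (auto simp: if_distrib[of "\<lambda>t. t * _"] sum.delta' cong: if_cong)
  have e2: "(\<Sum>x\<in>VN N. \<Sum>y\<in>VN N. ?a x * ?a y * green N x y) = green N z z"
  proof -
    have inner: "(\<Sum>y\<in>VN N. ?a x * ?a y * green N x y) = (if x = z then green N z z else 0)" for x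
    proof (cases "x = z")
      case True
      have "(\<Sum>y\<in>VN N. ?a x * ?a y * green N x y) = (\<Sum>y\<in>VN N. if y = z then green N z z else 0)"
        using True by (intro sum.cong) auto
      then show ?thesis using z True by simp
    qed simp
    have "(\<Sum>x\<in>VN N. \<Sum>y\<in>VN N. ?a x * ?a y * green N x y) =
          (\<Sum>x\<in>VN N. if x = z then green N z z else 0)"
      unfolding inner ..
    also have "\<dots> = green N z z" using z by simp
    finally show ?thesis .
  qed
  show ?thesis using c unfolding e1 e2 .
qed

lemma max_bound:
  assumes G: "is_GFF M N X" and S: "\<And>z. green N z z \<le> S" and S0: "S \<ge> 0"
  shows "integral\<^sup>L M (field_max N X) \<le> S/2 + ln (card (VN N)) + 1"
proof -
  have P: "prob_space M" and meas: "\<And>z. z \<in> VN N \<Longrightarrow> X z \<in> borel_measurable M"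
    using G unfolding is_GFF_def by auto
  interpret prob_space M by fact
  define K where "K = card (VN N)"
  have K1: "real K \<ge> 1" unfolding K_def card_VN by simp
  define a where "a = S/2 + ln K"
  have mgf: "\<And>z. z \<in> VN N \<Longrightarrow> integrable M (\<lambda>\<omega>. exp (X z \<omega>)) \<and>
       integral\<^sup>L M (\<lambda>\<omega>. exp (X z \<omega>)) = exp (green N z z / 2)"
    using normal_mgf[OF P GFF_single[OF G] meas] by blast
  define R where "R = (\<lambda>\<omega>. a + (\<Sum>z\<in>VN N. exp (-a-1) * exp (X z \<omega>)))"
  have Rint: "integrable M R" unfolding R_def using mgf by auto
  have IR: "integral\<^sup>L M R = a + (\<Sum>z\<in>VN N. exp (-a-1) * exp (green N z z / 2))"
    unfolding R_def using mgf by (simp add: Bochner_Integration.integral_sum prob_space)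
  also have "\<dots> \<le> a + (\<Sum>z\<in>VN N. exp (-a-1) * exp (S / 2))"
    using S by (intro add_left_mono sum_mono mult_left_mono) auto
  also have "\<dots> = a + K * exp (-a-1) * exp (S/2)" unfolding K_def by simp
  also have "K * exp (-a-1) * exp (S/2) = exp (-1)"
  proof -
    have "K * exp (-a-1) * exp (S/2) = exp (ln K) * exp (-a-1) * exp (S/2)" using K1 by simp
    also have "\<dots> = exp (ln K + (-a-1) + S/2)" by (simp add: exp_add)
    also have "ln K + (-a-1) + S/2 = -1" unfolding a_def by simp
    finally show ?thesis .
  qed
  also have "exp (-1::real) \<le> 1" by simp
  finally have IRb: "integral\<^sup>L M R \<le> a + 1" by simp
  have pw: "field_max N X \<omega> \<le> R \<omega>" for \<omega>
  proof -
    have ne: "VN N \<noteq> {}" unfolding VN_def by auto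
    have "field_max N X \<omega> \<in> (\<lambda>z. X z \<omega>) ` VN N" unfolding field_max_def
      by (rule Max_in) (use ne in auto)
    then obtain z0 where z0: "z0 \<in> VN N" "field_max N X \<omega> = X z0 \<omega>" by auto
    have "X z0 \<omega> - a \<le> exp (X z0 \<omega> - a - 1)" using exp_ge_add_one_self[of "X z0 \<omega> - a - 1"] by simp
    also have "\<dots> = exp (-a-1) * exp (X z0 \<omega>)" by (simp add: mult_exp_exp)
    also have "\<dots> \<le> (\<Sum>z\<in>VN N. exp (-a-1) * exp (X z \<omega>))"
      using z0 by (intro member_le_sum) auto
    finally show ?thesis unfolding R_def using z0 by simp
  qed
  have bnd: "integral\<^sup>L M (field_max N X) \<le> a + 1"
  proof (cases "integrable M (field_max N X)")
    case True
    then have "integral\<^sup>L M (field_max N X) \<le> integral\<^sup>L M R"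
      using Rint pw by (intro integral_mono) auto
    then show ?thesis using IRb by simp
  next
    case False
    then have "integral\<^sup>L M (field_max N X) = 0" by (rule not_integrable_integral_eq)
    moreover have "0 \<le> a" unfolding a_def using S0 K1 by simp
    ultimately show ?thesis by simp
  qed
  then show ?thesis unfolding a_def K_def by simp
qed



lemma lin_bound:
  assumes G: "is_GFF M (2^n) X"
  shows "integral\<^sup>L M (field_max (2^n) X) \<le> 3 * real n + 4"
proof -
  define S where "S = ln (2 * real (2^n) ^ 2 + 1) / ln 2"
  have l2: "0 < ln (2::real)" "ln (2::real) \<le> 1" using ln_le_minus_one[of 2] by auto
  have S0: "S \<ge> 0" unfolding S_def by simp
  have "2 * real (2^n) ^ 2 + 1 \<le> (2::real) ^ (2*n+2)"
  proof -
    have "real (2^n) ^ 2 = (2::real)^(2*n)" by (simp add: power_mult[symmetric] mult.commute)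
    moreover have "(2::real)^(2*n+2) = 4 * 2^(2*n)" by simp
    moreover have "(1::real) \<le> 2^(2*n)" by simp
    ultimately show ?thesis by linarith
  qed
  then have "ln (2 * real (2^n) ^ 2 + 1) \<le> ln ((2::real) ^ (2*n+2))"
    by (intro ln_le_cancel_iff[THEN iffD2]) (auto simp: add_pos_nonneg)
  also have "\<dots> = (2*n+2) * ln 2" by (subst ln_realpow) auto
  finally have Sb: "S \<le> 2*n+2" unfolding S_def using l2 by (simp add: divide_le_eq)
  have "real (card (VN (2^n))) = (2^n+1)^2" by (simp add: card_VN)
  also have "\<dots> \<le> (2^(n+1))^2" by (intro power_mono) auto
  also have "\<dots> = (2::real)^(2*n+2)" by (simp add: power_mult[symmetric] mult.commute)
  finally have c: "real (card (VN (2^n))) \<le> (2::real)^(2*n+2)" .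
  have cp: "0 < real (card (VN (2^n)))" unfolding card_VN of_nat_power by (intro zero_less_power) (simp add: add_pos_pos)
  have "ln (real (card (VN (2^n)))) \<le> ln ((2::real)^(2*n+2))"
    using c cp by (subst ln_le_cancel_iff) auto
  also have "\<dots> = (2*n+2) * ln 2" by (subst ln_realpow) auto
  also have "\<dots> \<le> 2*n+2" using l2 by (simp add: mult_left_le)
  finally have Kb: "ln (real (card (VN (2^n)))) \<le> 2*n+2" .
  have gb: "\<And>z. green (2^n) z z \<le> S" unfolding S_def by (rule green_diag_bound)
  have "integral\<^sup>L M (field_max (2^n) X) \<le> S/2 + ln (card (VN (2^n))) + 1"
    by (rule max_bound[OF G gb S0])
  then show ?thesis using Sb Kb by simp
qed

theorem lemma2p2:
  fixes M :: "nat \<Rightarrow> 'a measure"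
    and X :: "nat \<Rightarrow> int \<times> int \<Rightarrow> 'a \<Rightarrow> real"
  assumes "\<And>n. is_GFF (M n) (2 ^ n) (X n)"
  shows "\<exists>(nk :: nat \<Rightarrow> nat) (C :: real). filterlim nk at_top at_top \<and>
           (\<forall>k. integral\<^sup>L (M (nk k + 1)) (field_max (2 ^ (nk k + 1)) (X (nk k + 1)))
                \<le> integral\<^sup>L (M (nk k)) (field_max (2 ^ nk k) (X (nk k))) + C)"
proof -
  define E where "E n = integral\<^sup>L (M n) (field_max (2 ^ n) (X n))" for n
  have Eb: "\<And>n. E n \<le> 3 * real n + 4" unfolding E_def using lin_bound assms by blast
  define A where "A = {n. E (n+1) \<le> E n + 4}"
  have inf: "infinite A"
  proof
    assume fin: "finite A"
    obtain n0 where n0: "\<forall>n\<in>A. n < n0"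
      using fin finite_nat_bounded by (metis lessThan_iff subsetD)
    have grow: "E (n0 + j) \<ge> E n0 + 4 * j" for j
    proof (induction j)
      case (Suc j)
      have "n0 + j \<notin> A" using n0 by auto
      then have "E (n0 + j + 1) > E (n0+j) + 4" unfolding A_def by simp
      then show ?case using Suc by simp
    qed simp
    define j where "j = nat \<lceil>3 * real n0 + 5 - E n0\<rceil>"
    have "real j \<ge> 3 * real n0 + 5 - E n0" unfolding j_def by linarith
    then have "E (n0 + j) > 3 * real (n0 + j) + 4" using grow[of j] by simp
    then show False using Eb[of "n0+j"] by simp
  qed
  define nk where "nk = enumerate A"
  have sm: "strict_mono nk" unfolding nk_def using inf by (rule strict_mono_enumerate)
  have inA: "nk k \<in> A" for k unfolding nk_def using inf by (rule enumerate_in_set)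
  have "filterlim nk at_top at_top" using sm by (rule filterlim_subseq)
  moreover have "\<forall>k. E (nk k + 1) \<le> E (nk k) + 4" using inA unfolding A_def by simp
  ultimately show ?thesis unfolding E_def by blast
qed

end
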